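(* For every prime $p$, there exist a conic $Q\subset\mathbb P^2$ defined over $\mathbb F_{p^2}$ and a point $t\in C\cap Q$ (over $\overline{\mathbb F}_p$) such that $[\mathbb F_{p^2}(t):\mathbb F_{p^2}]=p+1$.
   Context: $C\subset\mathbb P^2$ is the Fermat curve $X_1^{p+1}+X_2^{p+1}+X_3^{p+1}=0$. Conics include degenerate ones (zero loci of nonzero homogeneous quadratic forms over $\mathbb F_{p^2}$). $\mathbb F_{p^2}(t)$ is the field generated over $\mathbb F_{p^2}$ by the ratios of coordinates of $t$. *)

theory Defs
  imports "HOL-Algebra.Algebraic_Closure_Type" "HOL-Algebra.Generated_Fields"
begin

text \<open>The ambient algebraically closed field is a type 'k of class alg_closed_field with
  CHAR('k) = p (playing the role of the algebraic closure of F_p).\<close>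

definition finite_subfield :: "nat \<Rightarrow> 'k::field set" where
  "finite_subfield q = {z. z ^ q = z}"

definition on_fermat :: "nat \<Rightarrow> 'k::field \<times> 'k \<times> 'k \<Rightarrow> bool" where
  "on_fermat p t = (case t of (x1, x2, x3) \<Rightarrow> x1 ^ (p+1) + x2 ^ (p+1) + x3 ^ (p+1) = 0)"

definition proj_point :: "'k::field \<times> 'k \<times> 'k \<Rightarrow> bool" where
  "proj_point t = (t \<noteq> (0, 0, 0))"

definition quad_form :: "'k::field \<times> 'k \<times> 'k \<times> 'k \<times> 'k \<times> 'k \<Rightarrow> 'k \<times> 'k \<times> 'k \<Rightarrow> 'k" where
  "quad_form c t = (case c of (a, b, d, e, f, g) \<Rightarrow> case t of (x1, x2, x3) \<Rightarrow>
      a * x1^2 + b * x2^2 + d * x3^2 + e * x1 * x2 + f * x1 * x3 + g * x2 * x3)"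

definition coord_ratios :: "'k::field \<times> 'k \<times> 'k \<Rightarrow> 'k set" where
  "coord_ratios t = (case t of (x1, x2, x3) \<Rightarrow>
      {xi / xj | xi xj. xi \<in> {x1, x2, x3} \<and> xj \<in> {x1, x2, x3} \<and> xj \<noteq> 0})"

definition field_of_point :: "'k::field set \<Rightarrow> 'k \<times> 'k \<times> 'k \<Rightarrow> 'k set" where
  "field_of_point F t = generate_field (ring_of_type_algebra :: 'k ring) (F \<union> coord_ratios t)"

end

theory Submission
  imports Defs "HOL-Algebra.Embedded_Algebras"
begin


abbreviation RT :: "'k::field ring" where "RT \<equiv> ring_of_type_algebra"

lemma RT_simps [simp]:
  "carrier (RT::'k::field ring) = UNIV"
  "x \<otimes>\<^bsub>(RT::'k ring)\<^esub> y = x * y"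
  "x \<oplus>\<^bsub>(RT::'k ring)\<^esub> y = x + y"
  "\<zero>\<^bsub>(RT::'k ring)\<^esub> = 0"
  "\<one>\<^bsub>(RT::'k ring)\<^esub> = 1"
  by (simp_all add: ring_of_type_algebra_def)

lemma RT_pow [simp]: "x [^]\<^bsub>(RT::'k::field ring)\<^esub> (n::nat) = x ^ n"
  by (induction n) (simp_all add: mult.commute)

lemma RT_pow' [simp]: "x [^]\<^bsub>(RT::'k::field ring)\<lparr>carrier := K\<rparr>\<^esub> (n::nat) = x ^ n"
  by (induction n) (simp_all add: mult.commute ring_of_type_algebra_def)

lemma RT_field: "field (RT::'k::field ring)" by (rule field_from_type_algebra)
lemma RT_ring: "ring (RT::'k::field ring)" by (rule ring_from_type_algebra)

lemma RT_minus [simp]: "\<ominus>\<^bsub>(RT::'k::field ring)\<^esub> x = - x"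
proof -
  interpret ring "RT::'k ring" by (rule RT_ring)
  have "x \<oplus>\<^bsub>(RT::'k ring)\<^esub> (- x) = \<zero>\<^bsub>(RT::'k ring)\<^esub>" by simp
  thus ?thesis using minus_equality[of "-x" x] by (simp add: add.commute)
qed

lemma RT_inv [simp]: "(x::'k::field) \<noteq> 0 \<Longrightarrow> inv\<^bsub>(RT::'k ring)\<^esub> x = inverse x"
proof -
  assume x: "x \<noteq> 0"
  interpret ring "RT::'k ring" by (rule RT_ring)
  show ?thesis by (rule monoid.inv_char) (use x in \<open>simp_all add: monoid_axioms\<close>)
qed

lemma subfield_RT_closed:
  fixes S :: "'k::field set"
  assumes "0 \<in> S" "1 \<in> S" "\<And>x y. x \<in> S \<Longrightarrow> y \<in> S \<Longrightarrow> x + y \<in> S"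
    "\<And>x. x \<in> S \<Longrightarrow> - x \<in> S" "\<And>x y. x \<in> S \<Longrightarrow> y \<in> S \<Longrightarrow> x * y \<in> S"
    "\<And>x. x \<in> S \<Longrightarrow> x \<noteq> 0 \<Longrightarrow> inverse x \<in> S"
  shows "subfield S (RT::'k ring)"
proof -
  interpret field "RT::'k ring" by (rule RT_field)
  show ?thesis
    by (rule subfieldI', rule subringI) (use assms in auto)
qed

lemma card_roots_sep:
  fixes f :: "'a::alg_closed_field poly"
  assumes "f \<noteq> 0" "\<forall>x. poly f x = 0 \<longrightarrow> poly (pderiv f) x \<noteq> 0"
  shows "card {x. poly f x = 0} = degree f"
  using assms
proof (induction "degree f" arbitrary: f rule: less_induct)
  case (less f)
  show ?case
  proof (cases "degree f = 0")
    case True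
    then obtain c where "f = [:c:]" by (meson degree_eq_zeroE)
    with less.prems show ?thesis by simp
  next
    case False
    then obtain x where x: "poly f x = 0" using alg_closed_imp_poly_has_root by blast
    hence "[:-x, 1:] dvd f" using poly_eq_0_iff_dvd by blast
    then obtain g where f: "f = [:-x, 1:] * g" by (elim dvdE)
    have g0: "g \<noteq> 0" using less.prems f by auto
    have deg: "degree f = Suc (degree g)" unfolding f using g0 by (subst degree_mult_eq) auto
    have pd: "poly (pderiv f) y = (y - x) * poly (pderiv g) y + poly g y" for y
    proof -
      have d1: "pderiv [:-x, 1:] = 1" by (simp add: pderiv_pCons)
      show ?thesis unfolding f pderiv_mult d1 by (simp add: algebra_simps)
    qed
    have gx: "poly g x \<noteq> 0" using less.prems(2) x pd[of x] by auto
    have hyp: "\<forall>y. poly g y = 0 \<longrightarrow> poly (pderiv g) y \<noteq> 0"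
    proof (intro allI impI)
      fix y assume "poly g y = 0"
      hence "poly f y = 0" by (simp add: f)
      hence "poly (pderiv f) y \<noteq> 0" using less.prems(2) by blast
      thus "poly (pderiv g) y \<noteq> 0" using pd[of y] \<open>poly g y = 0\<close> by auto
    qed
    have IH: "card {x. poly g x = 0} = degree g" using less.hyps[of g] deg g0 hyp by auto
    have "{y. poly f y = 0} = insert x {y. poly g y = 0}" by (auto simp: f)
    moreover have "finite {y. poly g y = 0}" using poly_roots_finite g0 by blast
    ultimately show ?thesis using IH deg gx by simp
  qed
qed

context
  fixes p :: nat
  assumes pp: "prime p" and ch: "CHAR('k::alg_closed_field) = p"
begin

lemma p_ge2: "p \<ge> 2" using pp prime_ge_2_nat by blast

lemma frob_add: "((x::'k) + y) ^ (p ^ n) = x ^ (p ^ n) + y ^ (p ^ n)"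
  by (rule freshmans_dream') (use pp ch in auto)

lemma frob_sum: "(\<Sum>i\<in>A. (f i :: 'k)) ^ (p ^ n) = (\<Sum>i\<in>A. f i ^ (p ^ n))"
  by (rule freshmans_dream_sum') (use pp ch in auto)

lemma frob_minus: "(- (x::'k)) ^ (p ^ n) = - (x ^ (p ^ n))"
proof -
  have "(x + (- x)) ^ (p ^ n) = x ^ (p ^ n) + (- x) ^ (p ^ n)" by (rule frob_add)
  moreover have "(0::'k) ^ (p ^ n) = 0" using p_ge2 by simp
  ultimately show ?thesis by (simp add: add_eq_0_iff)
qed

definition KK :: "'k set" where "KK = finite_subfield (p^2)"

lemma KK_iff: "x \<in> KK \<longleftrightarrow> x ^ (p^2) = x"
  by (simp add: KK_def finite_subfield_def)

lemma KK_subfield: "subfield KK (RT::'k ring)"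
proof (rule subfield_RT_closed)
  show "0 \<in> KK" "1 \<in> KK" using p_ge2 by (auto simp: KK_iff)
  show "x + y \<in> KK" if "x \<in> KK" "y \<in> KK" for x y
    using that frob_add[of x y 2] by (simp add: KK_iff)
  show "- x \<in> KK" if "x \<in> KK" for x
    using that frob_minus[of x 2] by (simp add: KK_iff)
  show "x * y \<in> KK" if "x \<in> KK" "y \<in> KK" for x y
    using that by (simp add: KK_iff power_mult_distrib)
  show "inverse x \<in> KK" if "x \<in> KK" "x \<noteq> 0" for x
    using that by (simp add: KK_iff power_inverse)
qed

lemma KK_card: "card KK = p^2"
proof -
  define f :: "'k poly" where "f = monom 1 (p^2) + [:0, -1:]"
  have q2: "p^2 \<ge> 2" using p_ge2 by (metis le_trans power2_nat_le_imp_le self_le_power zero_less_numeral pos2 one_le_numeral nat_le_linear)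
  have pf: "poly f x = x ^ (p^2) - x" for x by (simp add: f_def poly_monom)
  have degf: "degree f = p^2" unfolding f_def using q2
    by (subst degree_add_eq_left) (auto simp: degree_monom_eq)
  have f0: "f \<noteq> 0" using degf q2 by auto
  have c0: "of_nat p = (0::'k)" using ch by (simp add: of_nat_eq_0_iff_char_dvd)
  have pd: "poly (pderiv f) x = -1" for x
    using c0 by (simp add: f_def pderiv_add pderiv_monom pderiv_pCons poly_monom)
  have "card {x. poly f x = 0} = p^2"
    using card_roots_sep[OF f0] pd degf by simp
  moreover have "{x. poly f x = 0} = KK" by (auto simp: pf KK_iff)
  ultimately show ?thesis by simp
qed

lemma KK_finite: "finite KK"
proof -
  have "card KK > 0" using KK_card p_ge2 by simp
  thus ?thesis using card_ge_0_finite by blast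
qed

lemma zeta_exists: "\<exists>z::'k. z ^ (p+1) = 1 \<and> (\<forall>j. 0 < j \<and> j < p+1 \<longrightarrow> z ^ j \<noteq> 1)"
proof -
  define F where "F = (RT::'k ring)\<lparr>carrier := KK\<rparr>"
  have fF: "field F" unfolding F_def by (rule ring.subfield_iff(2)[OF RT_ring KK_subfield])
  have finF: "finite (carrier F)" using KK_finite by (simp add: F_def)
  obtain a where a: "a \<in> carrier (Multiplicative_Group.mult_of F)" and gen: "carrier (Multiplicative_Group.mult_of F) = {a [^]\<^bsub>F\<^esub> i |i::nat. i \<in> UNIV}"
    using field.finite_field_mult_group_has_gen[OF fF finF] by (elim bexE) (rule that)
  have z0: "\<zero>\<^bsub>F\<^esub> = 0" by (simp add: F_def ring_of_type_algebra_def)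
  have cm: "carrier (Multiplicative_Group.mult_of F) = KK - {0}"
    unfolding Multiplicative_Group.carrier_mult_of by (simp add: F_def ring_of_type_algebra_def)
  have pw: "a [^]\<^bsub>F\<^esub> i = a ^ i" for i unfolding F_def by (rule RT_pow')
  have gen': "KK - {0} = {a ^ i |i. True}" using gen unfolding cm pw by simp
  have aK: "a \<in> KK" "a \<noteq> 0" using a unfolding cm by auto
  obtain r where r: "p = Suc r" using p_ge2 by (cases p) auto
  have r1: "r \<ge> 1" using p_ge2 r by simp
  have aq: "a ^ (r * (r + 2)) = 1"
  proof -
    have "a ^ (p^2) = a" using aK KK_iff by blast
    moreover have "p^2 = Suc (r * (r+2))" by (simp add: r power2_eq_square algebra_simps)
    ultimately have "a * a ^ (r * (r+2)) = a * 1" by simp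
    thus ?thesis using aK by simp
  qed
  define z where "z = a ^ r"
  have "z ^ (p+1) = (a^r)^(r+2)" by (simp add: z_def r)
  also have "\<dots> = a^(r*(r+2))" by (simp only: power_mult)
  finally have "z ^ (p+1) = 1" using aq by simp
  moreover have "z ^ j \<noteq> 1" if j: "0 < j" "j < p+1" for j
  proof
    assume zj: "z ^ j = 1"
    define d where "d = r * j"
    have dpos: "d > 0" using j r1 by (simp add: d_def)
    have dlt: "d < r * (r + 2)" unfolding d_def
      using j r1 unfolding r by (intro mult_strict_left_mono) auto
    have ad: "a ^ d = 1" using zj by (simp add: z_def d_def power_mult)
    have "{a ^ i |i. True} \<subseteq> (\<lambda>i. a ^ i) ` {..<d}"
    proof
      fix x assume "x \<in> {a ^ i |i. True}"
      then obtain i where x: "x = a ^ i" by blast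
      have "a ^ i = a ^ (d * (i div d) + i mod d)" by (simp only: mult_div_mod_eq)
      also have "\<dots> = a ^ (i mod d)" by (simp only: power_add power_mult ad power_one mult_1)
      finally show "x \<in> (\<lambda>i. a ^ i) ` {..<d}" using x dpos by auto
    qed
    hence "card (KK - {0}) \<le> d" 
    proof -
      have "card (KK - {0}) \<le> card ((\<lambda>i. a ^ i) ` {..<d})"
        using gen' \<open>{a ^ i |i. True} \<subseteq> _\<close> by (intro card_mono) auto
      also have "\<dots> \<le> d" using card_image_le[of "{..<d}" "\<lambda>i. a ^ i"] by simp
      finally show ?thesis .
    qed
    moreover have "card (KK - {0}) = r * (r + 2)"
    proof -
      have "0 \<in> KK" using p_ge2 by (simp add: KK_iff)
      hence "card (KK - {0}) = p^2 - 1" using KK_card KK_finite by simp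
      also have "\<dots> = r * (r+2)" by (simp add: r power2_eq_square algebra_simps)
      finally show ?thesis .
    qed
    ultimately show False using dlt by simp
  qed
  ultimately show ?thesis by blast
qed

end


context
  fixes p :: nat and z s :: "'k::alg_closed_field"
  assumes pp: "prime p" and ch: "CHAR('k) = p"
    and z1: "z ^ (p+1) = 1" and zp: "\<forall>j. 0 < j \<and> j < p+1 \<longrightarrow> z ^ j \<noteq> 1"
    and sdef: "s ^ (p+1) = -(1 + z^p)"
begin

definition uu :: 'k where "uu = -(1 + z^p)"

lemma pS: "p = Suc (p - 1)" using p_ge2[OF pp ch] by simp

lemma z0: "z \<noteq> 0" using z1 by auto

lemma z_pp: "z ^ (p^2) = z"
proof -
  have e: "p^2 = (p+1) * (p-1) + 1" by (subst (1 2 3) pS) (simp add: power2_eq_square algebra_simps)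
  have "z^(p^2) = (z^(p+1))^(p-1) * z" by (simp only: e power_add power_mult power_one_right)
  thus ?thesis by (simp only: z1 power_one mult_1)
qed

lemma zK: "z \<in> KK p" using z_pp by (simp add: KK_iff[OF pp ch])

lemma zu: "z * uu = -(z + 1)"
  using z1 by (simp add: uu_def algebra_simps power_Suc[symmetric] del: power_Suc)

lemma u0: "uu \<noteq> 0"
proof
  assume "uu = 0"
  hence "z * uu = 0" by simp
  hence "-(z + 1) = 0" using zu by metis
  hence "z = -1" by (simp only: neg_equal_0_iff_equal eq_neg_iff_add_eq_0)
  hence "z ^ 2 = 1" by simp
  moreover have "2 < p + 1" using p_ge2[OF pp ch] by simp
  ultimately show False using zp by auto
qed

lemma up: "uu ^ p = z * uu"
proof -
  have "uu ^ p = uu ^ (p^1)" by simp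
  also have "\<dots> = -((1 + z^p) ^ (p^1))" unfolding uu_def by (rule frob_minus[OF pp ch])
  also have "(1 + z^p) ^ (p^1) = 1 + (z^p)^(p^1)" by (simp only: frob_add[OF pp ch]) simp
  also have "(z^p)^(p^1) = z" using z_pp by (simp add: power_mult[symmetric] power2_eq_square)
  finally show ?thesis using zu by simp
qed

lemma upm1: "uu ^ (p - 1) = z"
proof -
  have "uu ^ (p-1) * uu = z * uu" using up by (subst (asm) pS) (simp add: mult.commute)
  thus ?thesis using u0 by simp
qed

lemma uK: "uu \<in> KK p"
proof -
  have "uu ^ (p^2) = (uu ^ p) ^ p" by (simp add: power2_eq_square power_mult)
  also have "\<dots> = z ^ p * uu ^ p" by (simp add: up power_mult_distrib)
  also have "\<dots> = z ^ (p+1) * uu" by (simp add: up)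
  finally show ?thesis using z1 by (simp add: KK_iff[OF pp ch])
qed

lemma su: "s ^ (p+1) = uu" using sdef by (simp add: uu_def)

lemma s0: "s \<noteq> 0" using su u0 by auto

lemma s_q: "s ^ (p^2) = z * s"
proof -
  have e: "p^2 = (p+1) * (p-1) + 1" by (subst (1 2 3) pS) (simp add: power2_eq_square algebra_simps)
  have "s ^ (p^2) = (s^(p+1))^(p-1) * s" by (simp only: e power_add power_mult power_one_right)
  thus ?thesis by (simp only: su upm1)
qed

lemma s_qj: "s ^ ((p^2)^j) = z^j * s"
proof (induction j)
  case (Suc j)
  have "s ^ ((p^2)^Suc j) = (s ^ ((p^2)^j)) ^ (p^2)" by (simp only: power_Suc2 power_mult)
  also have "\<dots> = (z^j * s)^(p^2)" by (simp only: Suc.IH)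
  also have "\<dots> = (z^(p^2))^j * s^(p^2)" by (metis power_mult_distrib power_mult mult.commute)
  also have "\<dots> = z^Suc j * s" by (simp only: z_pp s_q power_Suc2 mult.assoc)
  finally show ?case .
qed simp

lemma K_qj: "(c::'k) \<in> KK p \<Longrightarrow> c ^ ((p^2)^j) = c"
proof (induction j)
  case (Suc j)
  have "c ^ ((p^2)^Suc j) = (c ^ ((p^2)^j)) ^ (p^2)" by (simp only: power_Suc2 power_mult)
  also have "\<dots> = c ^ (p^2)" by (simp only: Suc.IH[OF Suc.prems])
  also have "\<dots> = c" using Suc.prems KK_iff[OF pp ch] by blast
  finally show ?case .
qed simp

lemma fermat: "uu ^ (p+1) + (s^2) ^ (p+1) + (uu*s) ^ (p+1) = 0"
proof -
  have a: "uu ^ (p+1) = z * uu * uu" using up by simp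
  have b: "(s^2)^(p+1) = uu^2"
  proof -
    have "(s^2)^(p+1) = (s^(p+1))^2" by (metis power_mult mult.commute)
    thus ?thesis by (simp only: su)
  qed
  have c: "(uu*s)^(p+1) = z * uu * uu * uu" by (simp only: power_mult_distrib a su)
  have "uu ^ (p+1) + (s^2) ^ (p+1) + (uu*s) ^ (p+1) = uu^2 * (z + 1 + z * uu)"
    unfolding a b c by (simp add: algebra_simps power2_eq_square)
  also have "\<dots> = 0" by (simp add: zu)
  finally show ?thesis .
qed

lemma zinj: "inj_on (\<lambda>j. z^j * s) {..p}"
proof (rule inj_onI)
  fix i j assume i: "i \<in> {..p}" and j: "j \<in> {..p}" and e: "z^i * s = z^j * s"
  hence e': "z^i = z^j" using s0 by simp
  show "i = j"
  proof (rule ccontr)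
    assume "i \<noteq> j"
    then consider "i < j" | "j < i" by linarith
    thus False
    proof cases
      case 1
      have "z^i * z^(j-i) = z^j" by (subst power_add[symmetric]) (use 1 in simp)
      hence "z^i * z^(j-i) = z^i * 1" using e' by simp
      hence "z^(j-i) = 1" using z0 by simp
      thus False using zp 1 j by auto
    next
      case 2
      have "z^j * z^(i-j) = z^i" by (subst power_add[symmetric]) (use 2 in simp)
      hence "z^j * z^(i-j) = z^j * 1" using e' by simp
      hence "z^(i-j) = 1" using z0 by simp
      thus False using zp 2 i by auto
    qed
  qed
qed

end


context
  fixes p :: nat and z s :: "'k::alg_closed_field"
  assumes pp: "prime p" and ch: "CHAR('k) = p"
    and z1: "z ^ (p+1) = 1" and zp: "\<forall>j. 0 < j \<and> j < p+1 \<longrightarrow> z ^ j \<noteq> 1"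
    and sdef: "s ^ (p+1) = -(1 + z^p)"
begin

definition SS :: "nat \<Rightarrow> 'k set" where
  "SS n = {\<Sum>i<n. c i * s^i | c. \<forall>i. c i \<in> KK p}"

lemma KK_one: "(1::'k) \<in> KK p" by (simp add: KK_iff[OF pp ch])

lemma K0: "(0::'k) \<in> KK p" using p_ge2[OF pp ch] by (simp add: KK_iff[OF pp ch])

lemma SS0: "SS 0 = {0}"
  unfolding SS_def using K0 by (auto intro!: exI[of _ "\<lambda>_. 0"])

lemma SS_Suc: "SS (Suc n) = ring.line_extension RT (KK p) (s^n) (SS n)"
proof -
  interpret ring "RT::'k ring" by (rule RT_ring)
  show ?thesis
  proof -
  have A: "x \<in> line_extension (KK p) (s^n) (SS n)" if "x \<in> SS (Suc n)" for x
  proof -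
    note that
    then obtain c where c: "\<forall>i. c i \<in> KK p" "x = (\<Sum>i<Suc n. c i * s^i)" unfolding SS_def by blast
    have "x = c n * s^n + (\<Sum>i<n. c i * s^i)" using c(2) by (simp add: add.commute)
    moreover have "(\<Sum>i<n. c i * s^i) \<in> SS n" unfolding SS_def using c(1) by blast
    ultimately show "x \<in> line_extension (KK p) (s^n) (SS n)"
      unfolding line_extension_mem_iff using c(1) by auto
  qed
  have B: "x \<in> SS (Suc n)" if "x \<in> line_extension (KK p) (s^n) (SS n)" for x
  proof -
    from that obtain k v where kv: "k \<in> KK p" "v \<in> SS n" "x = k * s^n + v"
      unfolding line_extension_mem_iff by auto
    then obtain c where c: "\<forall>i. c i \<in> KK p" "v = (\<Sum>i<n. c i * s^i)" unfolding SS_def by blast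
    define c' where "c' = c(n := k)"
    have "(\<Sum>i<n. c' i * s^i) = (\<Sum>i<n. c i * s^i)" by (intro sum.cong) (auto simp: c'_def)
    hence "x = (\<Sum>i<Suc n. c' i * s^i)" using kv c by (simp add: c'_def add.commute)
    moreover have "\<forall>i. c' i \<in> KK p" using c kv by (simp add: c'_def)
    ultimately show "x \<in> SS (Suc n)" unfolding SS_def by blast
  qed
  show ?thesis using A B by blast
  qed
qed

lemma indep: assumes "n \<le> p" shows "s^n \<notin> SS n"
proof
  assume "s^n \<in> SS n"
  then obtain c where c: "\<forall>i. c i \<in> KK p" and e: "s^n = (\<Sum>i<n. c i * s^i)" unfolding SS_def by blast
  define f :: "'k poly" where "f = monom 1 n - (\<Sum>i<n. monom (c i) i)"
  have pf: "poly f x = x^n - (\<Sum>i<n. c i * x^i)" for x by (simp add: f_def poly_sum poly_monom)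
  have "coeff f n = 1" by (simp add: f_def coeff_sum)
  hence f0: "f \<noteq> 0" by auto
  have degf: "degree f \<le> n" unfolding f_def
    by (intro degree_diff_le degree_monom_le degree_sum_le) (auto intro: order.trans[OF degree_monom_le])
  have root: "poly f (z^j * s) = 0" if "j \<le> p" for j
  proof -
    define Q where "Q = (p^2)^j"
    have Q: "Q = p ^ (2*j)" by (simp add: Q_def power_mult)
    have "(s^n)^Q = (\<Sum>i<n. c i * s^i)^Q" by (simp add: e)
    also have "\<dots> = (\<Sum>i<n. (c i * s^i)^Q)" unfolding Q by (rule frob_sum[OF pp ch])
    also have "\<dots> = (\<Sum>i<n. c i * (z^j*s)^i)"
    proof (intro sum.cong refl)
      fix i
      have "(c i * s^i)^Q = c i ^ Q * (s^Q)^i" by (simp add: power_mult_distrib power_mult[symmetric] mult.commute)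
      also have "\<dots> = c i * (z^j*s)^i" unfolding Q_def using c by (simp add: K_qj[OF pp ch z1 zp sdef] s_qj[OF pp ch z1 zp sdef])
      finally show "(c i * s^i)^Q = c i * (z^j*s)^i" .
    qed
    finally have "((s^Q))^n = (\<Sum>i<n. c i * (z^j*s)^i)" by (simp add: power_mult[symmetric] mult.commute)
    hence "(z^j*s)^n = (\<Sum>i<n. c i * (z^j*s)^i)" unfolding Q_def by (simp add: s_qj[OF pp ch z1 zp sdef])
    thus ?thesis by (simp add: pf)
  qed
  have "(\<lambda>j. z^j * s) ` {..p} \<subseteq> {x. poly f x = 0}" using root by auto
  hence "card ((\<lambda>j. z^j * s) ` {..p}) \<le> card {x. poly f x = 0}"
    using poly_roots_finite[OF f0] by (intro card_mono) auto
  also have "\<dots> \<le> degree f" by (rule card_poly_roots_bound[OF f0])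
  finally have "p + 1 \<le> n" using degf card_image[OF zinj[OF pp ch z1 zp sdef]] by simp
  thus False using assms by simp
qed

lemma dimS: "n \<le> p+1 \<Longrightarrow> ring.dimension RT n (KK p) (SS n)"
proof (induction n)
  case 0
  interpret ring "RT::'k ring" by (rule RT_ring)
  have "dimension 0 (KK p) {\<zero>\<^bsub>RT\<^esub>}" by (rule zero_dim)
  thus ?case using SS0 by simp
next
  case (Suc n)
  interpret ring "RT::'k ring" by (rule RT_ring)
  show ?case unfolding SS_Suc
    by (rule Suc_dim) (use Suc indep in auto)
qed

lemma Kadd: "(a::'k) \<in> KK p \<Longrightarrow> b \<in> KK p \<Longrightarrow> a + b \<in> KK p"
  using subringE(7)[OF subfieldE(1)[OF KK_subfield[OF pp ch]]] by simp
lemma Kmult: "(a::'k) \<in> KK p \<Longrightarrow> b \<in> KK p \<Longrightarrow> a * b \<in> KK p"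
  using subringE(6)[OF subfieldE(1)[OF KK_subfield[OF pp ch]]] by simp
lemma Kneg: "(a::'k) \<in> KK p \<Longrightarrow> - a \<in> KK p"
  using subringE(5)[OF subfieldE(1)[OF KK_subfield[OF pp ch]]] by simp

abbreviation S where "S \<equiv> SS (Suc p)"

lemma memS: "x \<in> S \<longleftrightarrow> (\<exists>c. (\<forall>i. c i \<in> KK p) \<and> x = (\<Sum>i<Suc p. c i * s^i))"
  unfolding SS_def by blast

lemma S_add: "x \<in> S \<Longrightarrow> y \<in> S \<Longrightarrow> x + y \<in> S"
proof -
  assume "x \<in> S" "y \<in> S"
  then obtain c d where c: "\<forall>i. c i \<in> KK p" "x = (\<Sum>i<Suc p. c i * s^i)"
    and d: "\<forall>i. d i \<in> KK p" "y = (\<Sum>i<Suc p. d i * s^i)" unfolding memS by blast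
  have "x + y = (\<Sum>i<Suc p. (c i + d i) * s^i)" unfolding c(2) d(2) sum.distrib[symmetric] by (rule sum.cong) (simp_all add: distrib_right)
  moreover have "\<forall>i. c i + d i \<in> KK p" using c d Kadd by blast
  ultimately show ?thesis unfolding memS by (intro exI[of _ "\<lambda>i. c i + d i"]) simp
qed

lemma S_smult: "k \<in> KK p \<Longrightarrow> x \<in> S \<Longrightarrow> k * x \<in> S"
proof -
  assume k: "k \<in> KK p" and "x \<in> S"
  then obtain c where c: "\<forall>i. c i \<in> KK p" "x = (\<Sum>i<Suc p. c i * s^i)" unfolding memS by blast
  have "k * x = (\<Sum>i<Suc p. (k * c i) * s^i)" unfolding c(2) sum_distrib_left by (rule sum.cong) (simp_all add: mult_ac)
  moreover have "\<forall>i. k * c i \<in> KK p" using c k Kmult by blast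
  ultimately show ?thesis unfolding memS by (intro exI[of _ "\<lambda>i. k * c i"]) simp
qed

lemma S_neg: "x \<in> S \<Longrightarrow> - x \<in> S"
  using S_smult[OF Kneg[OF KK_one]] by simp

lemma K_in_S: "k \<in> KK p \<Longrightarrow> k \<in> S"
proof -
  assume k: "k \<in> KK p"
  define c where "c = (\<lambda>i::nat. if i = 0 then k else 0)"
  have "(\<Sum>i<Suc p. c i * s^i) = k" by (simp add: c_def sum.lessThan_Suc_shift del: sum.lessThan_Suc)
  moreover have "\<forall>i. c i \<in> KK p" using k K0 by (simp add: c_def)
  ultimately show ?thesis unfolding memS by metis
qed

lemma S_s: "x \<in> S \<Longrightarrow> s * x \<in> S"
proof -
  assume "x \<in> S"
  then obtain c where c: "\<forall>i. c i \<in> KK p" "x = (\<Sum>i<Suc p. c i * s^i)" unfolding memS by blast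
  define d where "d = (\<lambda>i. if i = 0 then c p * uu p z else c (i - 1))"
  have "s * x = (\<Sum>i<Suc p. c i * s^Suc i)" unfolding c(2) sum_distrib_left by (rule sum.cong) (simp_all add: mult_ac)
  also have "\<dots> = (\<Sum>i<p. c i * s^Suc i) + c p * s^(Suc p)" by simp
  also have "s^(Suc p) = uu p z" using su[OF pp ch z1 zp sdef] by simp
  also have "(\<Sum>i<p. c i * s^Suc i) + c p * uu p z = (\<Sum>i<Suc p. d i * s^i)"
    by (subst sum.lessThan_Suc_shift) (simp add: d_def add.commute)
  finally have "s * x = (\<Sum>i<Suc p. d i * s^i)" by simp
  moreover have "\<forall>i. d i \<in> KK p" using c Kmult[OF _ uK[OF pp ch z1 zp sdef]] by (simp add: d_def)
  ultimately show ?thesis unfolding memS by blast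
qed

lemma S_spow: "x \<in> S \<Longrightarrow> s^j * x \<in> S"
  by (induction j) (auto simp: mult.assoc intro: S_s)

lemma S_sum: "finite A \<Longrightarrow> (\<And>i. i \<in> A \<Longrightarrow> f i \<in> S) \<Longrightarrow> sum f A \<in> S"
  by (induction A rule: finite_induct) (auto intro: S_add K_in_S K0)

lemma S_mult: "x \<in> S \<Longrightarrow> y \<in> S \<Longrightarrow> x * y \<in> S"
proof -
  assume x: "x \<in> S" and "y \<in> S"
  then obtain c where c: "\<forall>i. c i \<in> KK p" "y = (\<Sum>i<Suc p. c i * s^i)" unfolding memS by blast
  have "x * y = (\<Sum>i<Suc p. c i * (s^i * x))" unfolding c(2) sum_distrib_left by (rule sum.cong) (simp_all add: mult_ac)
  also have "\<dots> \<in> S" using c x by (intro S_sum S_smult S_spow) auto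
  finally show ?thesis .
qed

lemma S_one: "1 \<in> S" using K_in_S KK_one by blast

lemma S_pow: "x \<in> S \<Longrightarrow> x^n \<in> S"
  by (induction n) (auto intro: S_mult S_one)

lemma S_finite: "finite S"
proof -
  have "S \<subseteq> (\<lambda>c. \<Sum>i<Suc p. c i * s^i) ` (PiE {..<Suc p} (\<lambda>_. KK p))"
  proof
    fix x assume "x \<in> S"
    then obtain c where c: "\<forall>i. c i \<in> KK p" "x = (\<Sum>i<Suc p. c i * s^i)" unfolding memS by blast
    have "x = (\<Sum>i<Suc p. restrict c {..<Suc p} i * s^i)" by (simp add: c)
    moreover have "restrict c {..<Suc p} \<in> PiE {..<Suc p} (\<lambda>_. KK p)" using c by (simp add: restrict_PiE_iff)
    ultimately show "x \<in> (\<lambda>c. \<Sum>i<Suc p. c i * s^i) ` (PiE {..<Suc p} (\<lambda>_. KK p))" by blast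
  qed
  moreover have "finite (PiE {..<Suc p} (\<lambda>_. KK p :: 'k set))" using KK_finite[OF pp ch] by (intro finite_PiE) auto
  ultimately show ?thesis using finite_subset by blast
qed

lemma S_inv: "x \<in> S \<Longrightarrow> x \<noteq> 0 \<Longrightarrow> inverse x \<in> S"
proof -
  assume x: "x \<in> S" "x \<noteq> 0"
  have "\<not> inj_on (\<lambda>i. x^i) {..card S}"
  proof
    assume "inj_on (\<lambda>i. x^i) {..card S}"
    hence "card {..card S} \<le> card S" using S_finite S_pow[OF x(1)] by (intro card_inj_on_le) auto
    thus False by simp
  qed
  then obtain i j where ij: "x^i = x^j" "i < j"
    unfolding inj_on_def by (metis linorder_neqE_nat)
  have "x^i * x^(j-i) = x^j" by (subst power_add[symmetric]) (use ij in simp)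
  hence "x^i * x^(j-i) = x^i * 1" using ij by simp
  hence "x^(j-i) = 1" using x by simp
  hence "x * x^(j-i-1) = 1" using ij by (metis Suc_diff_Suc diff_Suc_1 power_Suc zero_less_diff)
  hence "inverse x = x^(j-i-1)" by (rule inverse_unique)
  thus ?thesis using S_pow[OF x(1)] by simp
qed

lemma S_subfield: "subfield S RT"
  by (rule subfield_RT_closed) (auto intro: S_add S_neg S_mult S_inv S_one K_in_S K0)

lemma s_in_S: "s \<in> S" using S_spow[OF S_one, of 1] by simp

lemma KK_eq: "(KK p :: 'k set) = finite_subfield (p^2)"
  by (auto simp: KK_iff[OF pp ch] finite_subfield_def)

lemma gen_eq: "field_of_point (finite_subfield (p^2)) (uu p z, s^2, uu p z * s) = S"
proof -
  interpret field "RT::'k ring" by (rule RT_field)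
  define u where "u = uu p z"
  have u0': "u \<noteq> 0" using u0[OF pp ch z1 zp sdef] by (simp add: u_def)
  have uK': "u \<in> KK p" using uK[OF pp ch z1 zp sdef] by (simp add: u_def)
  define H where "H = KK p \<union> coord_ratios (u, s^2, u * s)"
  have FP: "field_of_point (finite_subfield (p^2)) (uu p z, s^2, uu p z * s) = generate_field RT H"
    unfolding field_of_point_def H_def u_def KK_eq ..
  have cr: "coord_ratios (u, s^2, u * s) = {xi / xj | xi xj. xi \<in> {u, s^2, u*s} \<and> xj \<in> {u, s^2, u*s} \<and> xj \<noteq> 0}"
    by (simp add: coord_ratios_def)
  have coordsS: "y \<in> S" if "y \<in> {u, s^2, u*s}" for y
  proof -
    have "u \<in> S" using K_in_S uK' by blast
    moreover have "s^2 \<in> S" using S_mult[OF s_in_S s_in_S] by (simp add: power2_eq_square)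
    moreover have "u * s \<in> S" using S_mult[OF \<open>u \<in> S\<close> s_in_S] .
    ultimately show ?thesis using that by blast
  qed
  have HS: "H \<subseteq> S"
  proof
    fix h assume "h \<in> H"
    then consider "h \<in> KK p" | "h \<in> coord_ratios (u, s^2, u * s)" unfolding H_def by blast
    thus "h \<in> S"
    proof cases
      case 1 thus ?thesis by (rule K_in_S)
    next
      case 2
      then obtain xi xj where x: "xi \<in> {u, s^2, u*s}" "xj \<in> {u, s^2, u*s}" "xj \<noteq> 0" "h = xi / xj"
        unfolding cr by blast
      have "xi * inverse xj \<in> S" using coordsS x by (intro S_mult S_inv) auto
      thus ?thesis using x by (simp add: divide_inverse)
    qed
  qed
  have sub1: "generate_field RT H \<subseteq> S"
    by (rule generate_field_min_subfield1) (use S_subfield HS in auto)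
  have Gsub: "subfield (generate_field RT H) RT" by (rule generate_field_is_subfield) simp
  note GR = subfieldE(1)[OF Gsub]
  have Gadd: "a + b \<in> generate_field RT H" if "a \<in> generate_field RT H" "b \<in> generate_field RT H" for a b
    using subringE(7)[OF GR that] by simp
  have Gmult: "a * b \<in> generate_field RT H" if "a \<in> generate_field RT H" "b \<in> generate_field RT H" for a b
    using subringE(6)[OF GR that] by simp
  have G1: "1 \<in> generate_field RT H" using subringE(3)[OF GR] by simp
  have GK: "k \<in> generate_field RT H" if "k \<in> KK p" for k
    using that by (intro generate_field.incl) (simp add: H_def)
  have Gs: "s \<in> generate_field RT H"
  proof -
    have "(u * s) / u \<in> coord_ratios (u, s^2, u * s)" unfolding cr using u0' by blast
    hence "(u * s) / u \<in> generate_field RT H" by (intro generate_field.incl) (simp add: H_def)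
    thus ?thesis using u0' by simp
  qed
  have Gpow: "s^i \<in> generate_field RT H" for i
    by (induction i) (auto intro: G1 Gmult Gs)
  have Gsum: "(\<Sum>i<n. c i * s^i) \<in> generate_field RT H" if "\<forall>i. c i \<in> KK p" for n c
  proof (induction n)
    case 0 show ?case using GK[OF K0] by simp
  next
    case (Suc n)
    have "(\<Sum>i<Suc n. c i * s^i) = (\<Sum>i<n. c i * s^i) + c n * s^n" by simp
    also have "\<dots> \<in> generate_field RT H" using that by (intro Gadd Suc Gmult GK Gpow) auto
    finally show ?case .
  qed
  have sub2: "S \<subseteq> generate_field RT H"
    using Gsum unfolding SS_def by blast
  show ?thesis unfolding FP using sub1 sub2 by blast
qed

lemma main:
  "\<exists>(c :: 'k \<times> 'k \<times> 'k \<times> 'k \<times> 'k \<times> 'k) (t :: 'k \<times> 'k \<times> 'k).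
           (case c of (a, b, d, e, f, g) \<Rightarrow>
              {a, b, d, e, f, g} \<subseteq> finite_subfield (p^2) \<and> {a, b, d, e, f, g} \<noteq> {0}) \<and>
           proj_point t \<and> on_fermat p t \<and> quad_form c t = 0 \<and>
           ring.dimension (ring_of_type_algebra :: 'k ring) (p + 1)
             (finite_subfield (p^2)) (field_of_point (finite_subfield (p^2)) t)"
proof (intro exI conjI)
  define u where "u = uu p z"
  have u0': "u \<noteq> 0" using u0[OF pp ch z1 zp sdef] by (simp add: u_def)
  have uK': "u \<in> KK p" using uK[OF pp ch z1 zp sdef] by (simp add: u_def)
  show "case (0, 0, 1, - uu p z, 0, 0) of (a, b, d, e, f, g) \<Rightarrow>
      {a, b, d, e, f, g} \<subseteq> finite_subfield (p^2) \<and> {a, b, d, e, f, g} \<noteq> {0::'k}"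
    using K0 KK_one Kneg[OF uK'] by (auto simp: KK_eq[symmetric] u_def)
  show "proj_point (uu p z, s^2, uu p z * s)" using u0' by (simp add: proj_point_def u_def)
  show "on_fermat p (uu p z, s^2, uu p z * s)"
    using fermat[OF pp ch z1 zp sdef] by (simp add: on_fermat_def)
  show "quad_form (0, 0, 1, - uu p z, 0, 0) (uu p z, s^2, uu p z * s) = 0"
    by (simp add: quad_form_def power2_eq_square algebra_simps)
  show "ring.dimension RT (p + 1) (finite_subfield (p^2)) (field_of_point (finite_subfield (p^2)) (uu p z, s^2, uu p z * s))"
    unfolding gen_eq using dimS[of "Suc p"] KK_eq by simp
qed

end

theorem proposition7p2:
  fixes p :: nat
  assumes "prime p"
    and "CHAR('k::alg_closed_field) = p"
  shows "\<exists>(c :: 'k \<times> 'k \<times> 'k \<times> 'k \<times> 'k \<times> 'k) (t :: 'k \<times> 'k \<times> 'k).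
           (case c of (a, b, d, e, f, g) \<Rightarrow>
              {a, b, d, e, f, g} \<subseteq> finite_subfield (p^2) \<and> {a, b, d, e, f, g} \<noteq> {0}) \<and>
           proj_point t \<and> on_fermat p t \<and> quad_form c t = 0 \<and>
           ring.dimension (ring_of_type_algebra :: 'k ring) (p + 1)
             (finite_subfield (p^2)) (field_of_point (finite_subfield (p^2)) t)"
proof -
  obtain z :: 'k where z: "z ^ (p+1) = 1" "\<forall>j. 0 < j \<and> j < p+1 \<longrightarrow> z ^ j \<noteq> 1"
    using zeta_exists[OF assms] by blast
  obtain s :: 'k where s: "s ^ (p+1) = -(1 + z^p)"
    using nth_root_exists[of "p+1"] by auto
  show ?thesis by (rule main[OF assms z s])
qed

end
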